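(* Let $G$ be an $n$-vertex graph with average degree $d>0$. Then there exist real numbers $D_1,D_2\geq d/4$ and a non-empty bipartite subgraph $G'$ of $G$ with parts $X_1$ and $X_2$ such that for every $x\in X_1$ we have $d_{G'}(x)\geq \frac{D_1}{256(\log n)^2}$ and $d_G(x)\leq D_1$, and for every $x\in X_2$ we have $d_{G'}(x)\geq \frac{D_2}{256(\log n)^2}$ and $d_G(x)\leq D_2$.
   Context: $d_F(x)$ denotes the degree of $x$ in the graph $F$; $\log$ is the natural logarithm. *)

theory Defs
  imports Complex_Main
begin

definition simple_graph :: "'a set \<Rightarrow> ('a \<Rightarrow> 'a \<Rightarrow> bool) \<Rightarrow> bool" where
  "simple_graph V E \<longleftrightarrow> finite V \<and> (\<forall>x y. E x y \<longrightarrow> x \<in> V \<and> y \<in> V)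
     \<and> (\<forall>x y. E x y \<longrightarrow> E y x) \<and> (\<forall>x. \<not> E x x)"

definition degree :: "'a set \<Rightarrow> ('a \<Rightarrow> 'a \<Rightarrow> bool) \<Rightarrow> 'a \<Rightarrow> nat" where
  "degree V E x = card {y \<in> V. E x y}"

definition avg_degree :: "'a set \<Rightarrow> ('a \<Rightarrow> 'a \<Rightarrow> bool) \<Rightarrow> real" where
  "avg_degree V E = (\<Sum>x\<in>V. real (degree V E x)) / real (card V)"

definition bipartite_subgraph ::
  "'a set \<Rightarrow> ('a \<Rightarrow> 'a \<Rightarrow> bool) \<Rightarrow> 'a set \<Rightarrow> 'a set \<Rightarrow> ('a \<Rightarrow> 'a \<Rightarrow> bool) \<Rightarrow> bool" where
  "bipartite_subgraph V E X1 X2 E' \<longleftrightarrow> X1 \<subseteq> V \<and> X2 \<subseteq> V \<and> X1 \<inter> X2 = {}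
     \<and> (\<forall>x y. E' x y \<longrightarrow> E x y)
     \<and> (\<forall>x y. E' x y \<longrightarrow> E' y x)
     \<and> (\<forall>x y. E' x y \<longrightarrow> (x \<in> X1 \<and> y \<in> X2) \<or> (x \<in> X2 \<and> y \<in> X1))"

end

theory Submission
  imports Defs
begin

definition ind :: "('a \<Rightarrow> 'a \<Rightarrow> bool) \<Rightarrow> 'a \<Rightarrow> 'a \<Rightarrow> real" where
  "ind E x y = (if E x y then 1 else 0)"

definition wt :: "('a \<Rightarrow> 'a \<Rightarrow> bool) \<Rightarrow> 'a set \<Rightarrow> 'a set \<Rightarrow> real" where
  "wt E X Y = (\<Sum>x\<in>X. \<Sum>y\<in>Y. ind E x y)"

lemma ind_nonneg: "ind E x y \<ge> 0" by (simp add: ind_def)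

lemma sum_ind_card: "finite Y \<Longrightarrow> (\<Sum>y\<in>Y. ind E x y) = real (card {y\<in>Y. E x y})"
  by (simp add: ind_def sum.If_cases Int_def conj_commute)

lemma wt_nonneg: "wt E X Y \<ge> 0"
  unfolding wt_def by (intro sum_nonneg) (simp add: ind_def)

lemma wt_empty[simp]: "wt E {} Y = 0" "wt E X {} = 0"
  by (auto simp: wt_def)

lemma wt_insert_left: "finite X \<Longrightarrow> x \<notin> X \<Longrightarrow> wt E (insert x X) Y = (\<Sum>y\<in>Y. ind E x y) + wt E X Y"
  by (simp add: wt_def)

lemma wt_insert_right: "finite Y \<Longrightarrow> y \<notin> Y \<Longrightarrow> wt E X (insert y Y) = (\<Sum>x\<in>X. ind E x y) + wt E X Y"
  by (simp add: wt_def sum.distrib)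

lemma wt_sym:
  assumes "\<forall>x y. E x y \<longrightarrow> E y x"
  shows "wt E X Y = wt E Y X"
proof -
  have "\<And>x y. ind E x y = ind E y x" using assms by (auto simp: ind_def)
  then show ?thesis unfolding wt_def by (subst sum.swap) simp
qed

lemma wt_union_left: "finite X \<Longrightarrow> finite X' \<Longrightarrow> X \<inter> X' = {} \<Longrightarrow> wt E (X \<union> X') Y = wt E X Y + wt E X' Y"
  by (simp add: wt_def sum.union_disjoint)

lemma wt_union_right: "finite Y \<Longrightarrow> finite Y' \<Longrightarrow> Y \<inter> Y' = {} \<Longrightarrow> wt E X (Y \<union> Y') = wt E X Y + wt E X Y'"
  by (simp add: wt_def sum.union_disjoint sum.distrib)

lemma wt_mono: "finite X' \<Longrightarrow> finite Y' \<Longrightarrow> X \<subseteq> X' \<Longrightarrow> Y \<subseteq> Y' \<Longrightarrow> wt E X Y \<le> wt E X' Y'"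
proof -
  assume a: "finite X'" "finite Y'" "X \<subseteq> X'" "Y \<subseteq> Y'"
  have "wt E X Y \<le> (\<Sum>x\<in>X. \<Sum>y\<in>Y'. ind E x y)"
    unfolding wt_def by (intro sum_mono sum_mono2) (use a in \<open>auto simp: ind_nonneg\<close>)
  also have "\<dots> \<le> wt E X' Y'"
    unfolding wt_def by (intro sum_mono2) (use a in \<open>auto intro: sum_nonneg simp: ind_nonneg\<close>)
  finally show ?thesis .
qed

lemma prune:
  assumes fA: "finite A" and fB: "finite B" and a: "a \<ge> 0" and b: "b \<ge> 0"
    and big: "wt E A B > real (card A) * a + real (card B) * b"
  shows "\<exists>X1\<subseteq>A. \<exists>X2\<subseteq>B. X1 \<noteq> {} \<and> X2 \<noteq> {}
     \<and> (\<forall>x\<in>X1. (\<Sum>y\<in>X2. ind E x y) \<ge> a) \<and> (\<forall>y\<in>X2. (\<Sum>x\<in>X1. ind E x y) \<ge> b)"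
proof -
  define f where "f = (\<lambda>(X, Y). wt E X Y - real (card X) * a - real (card Y) * b)"
  define S where "S = Pow A \<times> Pow B"
  have fS: "finite S" using fA fB by (simp add: S_def)
  have AB: "(A, B) \<in> S" by (simp add: S_def)
  define m where "m = Max (f ` S)"
  have "m \<in> f ` S" unfolding m_def using fS AB by (intro Max_in) auto
  then obtain X1 X2 where p: "(X1, X2) \<in> S" and fm: "f (X1, X2) = m" by auto
  have le: "\<And>q. q \<in> S \<Longrightarrow> f q \<le> m" unfolding m_def using fS by (intro Max_ge) auto
  have X1A: "X1 \<subseteq> A" and X2B: "X2 \<subseteq> B" using p by (auto simp: S_def)
  have f1: "finite X1" "finite X2" using X1A X2B fA fB finite_subset by auto
  have pos: "f (X1, X2) > 0" using le[OF AB] big fm by (simp add: f_def)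
  have ne1: "X1 \<noteq> {}"
  proof
    assume "X1 = {}" then have "f (X1, X2) \<le> 0" using b by (simp add: f_def)
    with pos show False by simp
  qed
  have ne2: "X2 \<noteq> {}"
  proof
    assume "X2 = {}" then have "f (X1, X2) \<le> 0" using a by (simp add: f_def)
    with pos show False by simp
  qed
  have c1: "(\<Sum>y\<in>X2. ind E x y) \<ge> a" if x: "x \<in> X1" for x
  proof -
    have "(X1 - {x}, X2) \<in> S" using X1A X2B by (auto simp: S_def)
    then have h1: "f (X1 - {x}, X2) \<le> f (X1, X2)" unfolding fm by (rule le)
    have ins: "insert x (X1 - {x}) = X1" using x by blast
    have h2: "wt E X1 X2 = (\<Sum>y\<in>X2. ind E x y) + wt E (X1 - {x}) X2"
      using wt_insert_left[of "X1 - {x}" x E X2] f1 unfolding ins by simp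
    have h3: "card X1 = card (X1 - {x}) + 1" using f1 x
      by (metis card_Suc_Diff1 Suc_eq_plus1)
    have "wt E (X1 - {x}) X2 - real (card (X1 - {x})) * a - real (card X2) * b
       \<le> wt E X1 X2 - real (card X1) * a - real (card X2) * b" using h1 by (simp add: f_def)
    then show ?thesis unfolding h2 h3 by (simp add: algebra_simps)
  qed
  have c2: "(\<Sum>x\<in>X1. ind E x y) \<ge> b" if y: "y \<in> X2" for y
  proof -
    have "(X1, X2 - {y}) \<in> S" using X1A X2B by (auto simp: S_def)
    then have h1: "f (X1, X2 - {y}) \<le> f (X1, X2)" unfolding fm by (rule le)
    have ins: "insert y (X2 - {y}) = X2" using y by blast
    have h2: "wt E X1 X2 = (\<Sum>x\<in>X1. ind E x y) + wt E X1 (X2 - {y})"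
      using wt_insert_right[where Y="X2 - {y}" and y=y and X=X1 and E=E] f1 unfolding ins by simp
    have h3: "card X2 = card (X2 - {y}) + 1" using f1 y
      by (metis card_Suc_Diff1 Suc_eq_plus1)
    have "wt E X1 (X2 - {y}) - real (card X1) * a - real (card (X2 - {y})) * b
       \<le> wt E X1 X2 - real (card X1) * a - real (card X2) * b" using h1 by (simp add: f_def)
    then show ?thesis unfolding h2 h3 by (simp add: algebra_simps)
  qed
  have c1': "\<forall>x\<in>X1. (\<Sum>y\<in>X2. ind E x y) \<ge> a" using c1 by blast
  have c2': "\<forall>y\<in>X2. (\<Sum>x\<in>X1. ind E x y) \<ge> b" using c2 by blast
  show ?thesis
    apply (rule exI[of _ X1], rule conjI[OF X1A])
    apply (rule exI[of _ X2], rule conjI[OF X2B])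
    using ne1 ne2 c1' c2' by simp
qed

lemma maxcut:
  assumes fC: "finite C" and sym: "\<forall>x y. E x y \<longrightarrow> E y x" and irr: "\<forall>x. \<not> E x x"
  shows "\<exists>T\<subseteq>C. wt E C C \<le> 4 * wt E T (C - T)"
proof -
  have indsym: "\<And>x y. ind E x y = ind E y x" using sym by (auto simp: ind_def)
  have indirr: "\<And>x. ind E x x = 0" using irr by (auto simp: ind_def)
  define g where "g = (\<lambda>T. wt E T (C - T))"
  define m where "m = Max (g ` Pow C)"
  have "m \<in> g ` Pow C" unfolding m_def using fC by (intro Max_in) auto
  then obtain T where T: "T \<subseteq> C" and gm: "g T = m" by auto
  have le: "\<And>T'. T' \<subseteq> C \<Longrightarrow> g T' \<le> m" unfolding m_def using fC by (intro Max_ge) auto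
  have fT: "finite T" "finite (C - T)" using T fC finite_subset by auto
  have h1: "(\<Sum>u\<in>T. ind E x u) \<le> (\<Sum>v\<in>C - T. ind E x v)" if x: "x \<in> T" for x
  proof -
    define T' where "T' = T - {x}"
    have fT': "finite T'" using fT by (simp add: T'_def)
    have eT: "T = insert x T'" "x \<notin> T'" using x by (auto simp: T'_def)
    have eC: "C - T' = insert x (C - T)" using x T by (auto simp: T'_def)
    have "g T' \<le> g T" using le[of T'] T gm by (auto simp: T'_def)
    moreover have "g T' = (\<Sum>u\<in>T'. ind E u x) + wt E T' (C - T)"
      unfolding g_def eC using fT x by (intro wt_insert_right) auto
    moreover have "g T = (\<Sum>v\<in>C - T. ind E x v) + wt E T' (C - T)"
      unfolding g_def using eT fT' by (subst (1) eT(1)) (intro wt_insert_left)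
    moreover have "(\<Sum>u\<in>T'. ind E u x) = (\<Sum>u\<in>T. ind E x u)"
      using eT fT' by (simp add: indirr indsym)
    ultimately show ?thesis by simp
  qed
  have h2: "(\<Sum>v\<in>C - T. ind E x v) \<le> (\<Sum>u\<in>T. ind E x u)" if x: "x \<in> C - T" for x
  proof -
    define R where "R = C - T - {x}"
    have fR: "finite R" using fT by (simp add: R_def)
    have eR: "C - T = insert x R" "x \<notin> R" using x by (auto simp: R_def)
    have eC: "C - insert x T = R" using x by (auto simp: R_def)
    have "g (insert x T) \<le> g T" using le[of "insert x T"] T gm x by auto
    moreover have "g (insert x T) = (\<Sum>v\<in>R. ind E x v) + wt E T R"
      unfolding g_def eC using fT x by (intro wt_insert_left) auto
    moreover have "g T = (\<Sum>u\<in>T. ind E u x) + wt E T R"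
      unfolding g_def using eR fR by (subst eR(1)) (intro wt_insert_right)
    moreover have "(\<Sum>v\<in>R. ind E x v) = (\<Sum>v\<in>C - T. ind E x v)"
      using eR fR by (simp add: indirr)
    moreover have "(\<Sum>u\<in>T. ind E u x) = (\<Sum>u\<in>T. ind E x u)"
      by (simp add: indsym)
    ultimately show ?thesis by simp
  qed
  have s1: "wt E T T \<le> wt E T (C - T)" unfolding wt_def by (intro sum_mono h1)
  have s2: "wt E (C - T) (C - T) \<le> wt E (C - T) T" unfolding wt_def by (intro sum_mono h2)
  have eq: "wt E (C - T) T = wt E T (C - T)" using wt_sym[OF sym] by simp
  have CU: "T \<union> (C - T) = C" using T by auto
  have d: "T \<inter> (C - T) = {}" by auto
  have "wt E C C = wt E T C + wt E (C - T) C"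
    using wt_union_left[OF fT d, of E C] by (simp only: CU)
  also have "wt E T C = wt E T T + wt E T (C - T)"
    using wt_union_right[OF fT d, of E T] by (simp only: CU)
  also have "wt E (C - T) C = wt E (C - T) T + wt E (C - T) (C - T)"
    using wt_union_right[OF fT d, of E "C - T"] by (simp only: CU)
  finally have "wt E C C = wt E T T + wt E T (C - T) + (wt E (C - T) T + wt E (C - T) (C - T))" .
  then show ?thesis using s1 s2 eq T by auto
qed


lemma ln_ge_of_exp: "exp t \<le> N \<Longrightarrow> N \<le> x \<Longrightarrow> t \<le> ln (x::real)"
  by (metis exp_gt_zero ln_exp ln_le_cancel_iff order_less_le_trans order_trans)

lemma exp_nat_le: "exp (real k) \<le> 3 ^ k"
proof -
  have "exp (real k) = exp 1 ^ k" by (metis exp_of_nat_mult mult.right_neutral)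
  also have "\<dots> \<le> 3 ^ k" by (intro power_mono exp_le) auto
  finally show ?thesis .
qed

lemma ln2_ge: "ln (2::real) \<ge> 3/5"
proof -
  have "exp 3 \<le> (27::real)" using exp_nat_le[of 3] by simp
  then have "3 \<le> ln (32::real)" by (intro ln_ge_of_exp[of 3 27]) auto
  also have "ln (32::real) = 5 * ln 2" using ln_realpow[of 2 5] by simp
  finally show ?thesis by simp
qed

theorem lemma2p3:
  fixes V :: "'a set" and E :: "'a \<Rightarrow> 'a \<Rightarrow> bool" and n :: nat and d :: real
  assumes "simple_graph V E"
    and "n = card V"
    and "d = avg_degree V E"
    and "d > 0"
  shows "\<exists>D1 D2 :: real. \<exists>X1 X2 :: 'a set. \<exists>E' :: 'a \<Rightarrow> 'a \<Rightarrow> bool.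
           D1 \<ge> d / 4 \<and> D2 \<ge> d / 4
         \<and> bipartite_subgraph V E X1 X2 E' \<and> X1 \<union> X2 \<noteq> {}
         \<and> (\<forall>x\<in>X1. real (degree (X1 \<union> X2) E' x) \<ge> D1 / (256 * (ln (real n))\<^sup>2)
                    \<and> real (degree V E x) \<le> D1)
         \<and> (\<forall>x\<in>X2. real (degree (X1 \<union> X2) E' x) \<ge> D2 / (256 * (ln (real n))\<^sup>2)
                    \<and> real (degree V E x) \<le> D2)"
proof -
  have fin: "finite V" and inV: "\<And>x y. E x y \<Longrightarrow> x \<in> V \<and> y \<in> V"
    and sym: "\<forall>x y. E x y \<longrightarrow> E y x" and irr: "\<forall>x. \<not> E x x"
    using assms(1) unfolding simple_graph_def by auto
  define dg where "dg = degree V E"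
  have degR: "real (dg x) = (\<Sum>y\<in>V. ind E x y)" for x
    unfolding dg_def degree_def using sum_ind_card[OF fin] by simp
  define M where "M = wt E V V"
  have Msum: "M = (\<Sum>x\<in>V. real (dg x))" unfolding M_def wt_def degR by simp
  have dM: "d = M / real n"
    using assms(2,3) by (simp add: avg_degree_def Msum dg_def)
  have npos: "n > 0" using assms(4) dM by (cases "n = 0") auto
  have Mpos: "M > 0" using assms(4) dM npos by (simp add: zero_less_divide_iff)
  have Vne: "V \<noteq> {}" using npos assms(2) by auto
  define \<Delta> where "\<Delta> = Max (dg ` V)"
  have dgle: "x \<in> V \<Longrightarrow> dg x \<le> \<Delta>" for x unfolding \<Delta>_def using fin by auto
  have "\<Delta> \<in> dg ` V" unfolding \<Delta>_def using fin Vne by (intro Max_in) auto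
  then obtain u where u: "u \<in> V" "dg u = \<Delta>" by auto
  have Dpos: "\<Delta> > 0"
  proof (rule ccontr)
    assume "\<not> \<Delta> > 0"
    then have "\<forall>x\<in>V. dg x = 0" using dgle by fastforce
    then have "M = 0" by (simp add: Msum)
    with Mpos show False by simp
  qed
  have "{y\<in>V. E u y} \<noteq> {}" using Dpos u unfolding dg_def degree_def by (metis card.empty less_irrefl)
  then obtain v where v: "v \<in> V" "E u v" by auto
  have uv: "u \<noteq> v" using v irr by auto
  have n2: "n \<ge> 2"
  proof -
    have "card {u, v} \<le> card V" using u v fin by (intro card_mono) auto
    then show ?thesis using uv assms(2) by simp
  qed
  have dgn: "x \<in> V \<Longrightarrow> real (dg x) \<le> real n - 1" for x
  proof -
    assume x: "x \<in> V"
    have "{y\<in>V. E x y} \<subseteq> V - {x}" using irr by auto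
    then have "card {y\<in>V. E x y} \<le> card (V - {x})" using fin by (intro card_mono) auto
    then show ?thesis using x fin assms(2) npos by (simp add: dg_def degree_def)
  qed
  have Dn: "real \<Delta> \<le> real n - 1" using dgn[OF u(1)] u(2) by simp
  have dD: "d \<le> real \<Delta>"
  proof -
    have "M \<le> (\<Sum>x\<in>V. real \<Delta>)" unfolding Msum using dgle by (intro sum_mono) auto
    then have "M \<le> real n * real \<Delta>" using assms(2) by simp
    then show ?thesis using dM npos by (simp add: divide_le_eq mult.commute)
  qed
  define L where "L = 256 * (ln (real n))\<^sup>2"
  have lnpos: "ln (real n) > 0" using n2 by simp
  have Lpos: "L > 0" unfolding L_def using lnpos by simp
  show ?thesis
  proof (cases "real \<Delta> \<le> L")
    case True
    define E' where "E' = (\<lambda>x y. (x = u \<and> y = v) \<or> (x = v \<and> y = u))"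
    have s1: "{y \<in> {u} \<union> {v}. E' u y} = {v}" using uv by (auto simp: E'_def)
    have s2: "{y \<in> {u} \<union> {v}. E' v y} = {u}" using uv by (auto simp: E'_def)
    have g1: "degree ({u} \<union> {v}) E' u = 1" unfolding degree_def s1 by simp
    have g2: "degree ({u} \<union> {v}) E' v = 1" unfolding degree_def s2 by simp
    have bip: "bipartite_subgraph V E {u} {v} E'"
      unfolding bipartite_subgraph_def E'_def using u v uv sym by auto
    have f1: "real \<Delta> / L \<le> 1" using True Lpos by simp
    have f2: "real (dg v) \<le> real \<Delta>" using dgle v by simp
    have f3: "d / 4 \<le> real \<Delta>" using dD assms(4) by simp
    show ?thesis
      apply (rule exI[of _ "real \<Delta>"], rule exI[of _ "real \<Delta>"], rule exI[of _ "{u}"], rule exI[of _ "{v}"], rule exI[of _ E'])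
      using bip u f1 f2 f3 by (simp add: g1 g2 L_def dg_def del: Un_insert_left Un_insert_right insert_is_Un)
  next
    case False
    then have DL: "L < real \<Delta>" by simp
    have lnge: "N \<le> real n \<Longrightarrow> exp t \<le> N \<Longrightarrow> t \<le> ln (real n)" for t N
      using ln_ge_of_exp by blast
    have "ln (real n) \<ge> 3/5" using ln2_ge n2
      by (metis ln_le_cancel_iff of_nat_le_iff of_nat_numeral order_trans zero_less_numeral
          of_nat_0_less_iff npos)
    then have "L \<ge> 256 * (3/5)^2" unfolding L_def by (intro mult_left_mono power_mono) auto
    moreover have "256 * (3/5::real)^2 = 2304/25" by (simp add: power2_eq_square)
    ultimately have "real n \<ge> 81" using DL Dn by linarith
    then have "ln (real n) \<ge> 4" using exp_nat_le[of 4] lnge[of 81 4] by simp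
    then have "L \<ge> 256 * 4^2" unfolding L_def by (intro mult_left_mono power_mono) auto
    moreover have "256 * (4::real)^2 = 4096" by simp
    ultimately have "real n \<ge> 2187" using DL Dn by linarith
    then have ln6: "ln (real n) \<ge> 7" using exp_nat_le[of 7] lnge[of 2187 7] by simp
    have indsym: "\<And>x y. ind E x y = ind E y x" using sym by (auto simp: ind_def)
    define H where "H = {x\<in>V. real (dg x) \<ge> d / 4}"
    define Lo where "Lo = V - H"
    have fH: "finite H" "finite Lo" using fin by (auto simp: H_def Lo_def)
    have HV: "H \<subseteq> V" by (auto simp: H_def)
    have dHL: "H \<inter> Lo = {}" by (auto simp: Lo_def)
    have VHL: "H \<union> Lo = V" using HV by (auto simp: Lo_def)
    have wLo: "wt E Lo V \<le> M / 4"
    proof -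
      have "wt E Lo V = (\<Sum>x\<in>Lo. real (dg x))" unfolding wt_def degR by simp
      also have "\<dots> \<le> (\<Sum>x\<in>Lo. d / 4)" by (intro sum_mono) (auto simp: Lo_def H_def)
      also have "\<dots> = real (card Lo) * (d / 4)" by simp
      also have "\<dots> \<le> real n * (d / 4)"
        using assms(2) fin assms(4) by (intro mult_right_mono) (auto simp: Lo_def card_mono)
      also have "\<dots> = M / 4" using dM npos by simp
      finally show ?thesis .
    qed
    have wHH: "wt E H H \<ge> M / 2"
    proof -
      have "M = wt E H V + wt E Lo V" unfolding M_def
        using wt_union_left[OF fH dHL, of E V] by (simp only: VHL)
      moreover have "wt E H V = wt E H H + wt E H Lo"
        using wt_union_right[OF fH dHL, of E H] by (simp only: VHL)
      moreover have "wt E H Lo \<le> wt E V Lo" using fin fH HV by (intro wt_mono) auto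
      moreover have "wt E V Lo = wt E Lo V" using wt_sym[OF sym] by simp
      ultimately show ?thesis using wLo by linarith
    qed
    obtain T where TH: "T \<subseteq> H" and cut: "wt E H H \<le> 4 * wt E T (H - T)"
      using maxcut[OF fH(1) sym irr] by blast
    define W where "W = wt E T (H - T)"
    have WM: "W \<ge> M / 8" using cut wHH W_def by simp
    obtain k where k: "2 ^ k \<le> n" "n < 2 ^ (k + 1)"
      using ex_power_ivl1[of 2 n] npos by auto
    define c where "c = 2 * k + 4"
    have kln: "real k * ln 2 \<le> ln (real n)"
    proof -
      have "(2::real) ^ k \<le> real n" using k(1) by (metis of_nat_le_iff of_nat_numeral of_nat_power)
      then have "ln ((2::real) ^ k) \<le> ln (real n)" using npos by (subst ln_le_cancel_iff) auto
      then show ?thesis by (simp add: ln_realpow)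
    qed
    have cln: "real c < 4 * ln (real n)"
    proof -
      have "real k \<le> ln (real n) / ln 2" using kln by (simp add: le_divide_eq)
      also have "\<dots> \<le> ln (real n) / (3/5)" using ln2_ge lnpos by (intro divide_left_mono) auto
      finally have "real k \<le> 5/3 * ln (real n)" by simp
      then show ?thesis unfolding c_def using ln6 by linarith
    qed
    have Lc: "L > 16 * (real c)^2"
    proof -
      have "(real c)^2 < (4 * ln (real n))^2" using cln by (intro power_strict_mono) auto
      then show ?thesis unfolding L_def by (simp add: power_mult_distrib)
    qed
    have dgpos: "x \<in> H \<Longrightarrow> dg x > 0" for x using assms(4) by (auto simp: H_def)
    have Mge1: "M \<ge> 1"
    proof -
      have "M = real (\<Sum>x\<in>V. dg x)" unfolding Msum by simp
      then have "(\<Sum>x\<in>V. dg x) > 0" using Mpos by (metis of_nat_0_less_iff)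
      then have "(\<Sum>x\<in>V. dg x) \<ge> 1" by simp
      then show ?thesis using \<open>M = real (\<Sum>x\<in>V. dg x)\<close> by (metis of_nat_1 of_nat_le_iff)
    qed
    define P :: real where "P = 2 ^ (k+1)"
    have nP: "real n < P" unfolding P_def using k(2)
      by (metis of_nat_less_iff of_nat_numeral of_nat_power)
    have ce: "c = 2 + ((k+1)+(k+1))" unfolding c_def by simp
    have cP: "(2::real) ^ c = 4 * (P * P)"
      unfolding P_def ce by (simp only: power_add) simp
    have bnd: "real \<Delta> < 2 ^ c * real (dg x)" if x: "x \<in> H" for x
    proof -
      have g0: "real (dg x) > 0" using dgpos[OF x] by simp
      have "d / 4 \<le> real (dg x)" using x by (auto simp: H_def)
      then have h1: "M \<le> 4 * real n * real (dg x)" using dM npos by (simp add: field_simps)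
      have h2: "real n * real n < P * P" using nP npos by (intro mult_strict_mono) auto
      have "real \<Delta> < real n" using Dn by simp
      also have "real n \<le> real n * M" using Mge1 npos by simp
      also have "\<dots> \<le> real n * (4 * real n * real (dg x))" using h1 npos by (intro mult_left_mono) auto
      also have "\<dots> = 4 * (real n * real n) * real (dg x)" by (simp add: algebra_simps)
      also have "\<dots> < 4 * (P * P) * real (dg x)" using h2 g0 by simp
      also have "\<dots> = 2 ^ c * real (dg x)" using cP by simp
      finally show ?thesis .
    qed
    define cls where "cls = (\<lambda>x. LEAST j. \<Delta> < 2 ^ (j+1) * dg x)"
    have bndn: "\<Delta> < 2 ^ ((c - 1) + 1) * dg x" if "x \<in> H" for x
    proof -
      have "real \<Delta> < real (2 ^ c * dg x)" using bnd[OF that] by simp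
      then have "\<Delta> < 2 ^ c * dg x" by (simp only: of_nat_less_iff)
      moreover have "c - 1 + 1 = c" unfolding c_def by simp
      ultimately show ?thesis by simp
    qed
    have cls1: "\<Delta> < 2 ^ (cls x + 1) * dg x" if "x \<in> H" for x
      unfolding cls_def using bndn[OF that] by (rule LeastI)
    have cls2: "cls x < c" if "x \<in> H" for x
    proof -
      have "cls x \<le> c - 1" unfolding cls_def using bndn[OF that] by (rule Least_le)
      then show ?thesis unfolding c_def by simp
    qed
    have cls3: "2 ^ cls x * dg x \<le> \<Delta>" if x: "x \<in> H" for x
    proof (cases "cls x")
      case 0 then show ?thesis using dgle x HV by auto
    next
      case (Suc j)
      then have "j < cls x" by simp
      then have "\<not> \<Delta> < 2 ^ (j+1) * dg x" unfolding cls_def by (rule not_less_Least)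
      then show ?thesis using Suc by simp
    qed
    define A where "A = (\<lambda>i. {x\<in>T. cls x = i})"
    define B where "B = (\<lambda>j. {y\<in>H - T. cls y = j})"
    have fT: "finite T" "finite (H - T)" using fH TH finite_subset by auto
    have split1: "wt E T Y = (\<Sum>i<c. wt E (A i) Y)" for Y
    proof -
      have "wt E T Y = (\<Sum>i<c. \<Sum>x\<in>{x\<in>T. cls x = i}. \<Sum>y\<in>Y. ind E x y)"
        unfolding wt_def using fT cls2 TH by (subst sum.group[symmetric, of T "{..<c}" cls]) auto
      then show ?thesis by (simp add: wt_def A_def)
    qed
    have split2: "wt E X (H - T) = (\<Sum>j<c. wt E X (B j))" for X
    proof -
      have "wt E X (H - T) = (\<Sum>x\<in>X. \<Sum>j<c. \<Sum>y\<in>{y\<in>H-T. cls y = j}. ind E x y)"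
        unfolding wt_def using fT cls2 
        by (intro sum.cong refl, subst sum.group[symmetric, of "H-T" "{..<c}" cls]) auto
      then show ?thesis unfolding wt_def B_def by (subst (asm) sum.swap) simp
    qed
    have Wsum: "W = (\<Sum>i<c. \<Sum>j<c. wt E (A i) (B j))"
      unfolding W_def split1 split2 by (rule sum.swap)
    have cpos: "c > 0" unfolding c_def by simp
    obtain i j where ij: "i < c" "j < c" and big: "wt E (A i) (B j) \<ge> W / (real c)^2"
    proof (rule ccontr)
      assume "\<not> thesis"
      then have lt: "\<forall>i<c. \<forall>j<c. wt E (A i) (B j) < W / (real c)^2" using that by force
      have "(\<Sum>i<c. \<Sum>j<c. wt E (A i) (B j)) < (\<Sum>i<c. \<Sum>j<c. W / (real c)^2)"
        using cpos lt by (intro sum_strict_mono) auto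
      then have "W < (\<Sum>i<c. \<Sum>j<c. W / (real c)^2)" using Wsum by simp
      also have "\<dots> = W" using cpos by (simp add: power2_eq_square)
      finally show False by simp
    qed
    have fA: "finite (A i)" "finite (B j)" using fT by (auto simp: A_def B_def)
    define a where "a = real \<Delta> / 2 ^ i / L"
    define b where "b = real \<Delta> / 2 ^ j / L"
    have Dlt: "real \<Delta> / 2 ^ cls x < 2 * real (dg x)" if "x \<in> H" for x
    proof -
      have "real \<Delta> < 2 ^ (cls x + 1) * real (dg x)" using cls1[OF that]
        by (metis of_nat_less_iff of_nat_mult of_nat_numeral of_nat_power)
      then show ?thesis by (simp add: divide_less_eq field_simps)
    qed
    have AH: "A i \<subseteq> H" "B j \<subseteq> H" using TH by (auto simp: A_def B_def)
    have ca: "real (card (A i)) * (real \<Delta> / 2 ^ i) \<le> 2 * (\<Sum>x\<in>A i. real (dg x))"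
    proof -
      have "real (card (A i)) * (real \<Delta> / 2 ^ i) = (\<Sum>x\<in>A i. real \<Delta> / 2 ^ cls x)"
        by (simp add: A_def)
      also have "\<dots> \<le> (\<Sum>x\<in>A i. 2 * real (dg x))"
        using AH Dlt by (intro sum_mono) (auto intro: less_imp_le)
      finally show ?thesis by (simp add: sum_distrib_left)
    qed
    have cb: "real (card (B j)) * (real \<Delta> / 2 ^ j) \<le> 2 * (\<Sum>x\<in>B j. real (dg x))"
    proof -
      have "real (card (B j)) * (real \<Delta> / 2 ^ j) = (\<Sum>x\<in>B j. real \<Delta> / 2 ^ cls x)"
        by (simp add: B_def)
      also have "\<dots> \<le> (\<Sum>x\<in>B j. 2 * real (dg x))"
        using AH Dlt by (intro sum_mono) (auto intro: less_imp_le)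
      finally show ?thesis by (simp add: sum_distrib_left)
    qed
    have dAB: "A i \<inter> B j = {}" by (auto simp: A_def B_def)
    have sAB: "(\<Sum>x\<in>A i. real (dg x)) + (\<Sum>x\<in>B j. real (dg x)) \<le> M"
    proof -
      have "(\<Sum>x\<in>A i. real (dg x)) + (\<Sum>x\<in>B j. real (dg x)) = (\<Sum>x\<in>A i \<union> B j. real (dg x))"
        using fA dAB by (simp add: sum.union_disjoint)
      also have "\<dots> \<le> M" unfolding Msum using AH HV fin by (intro sum_mono2) auto
      finally show ?thesis .
    qed
    have cost: "real (card (A i)) * a + real (card (B j)) * b \<le> 2 * M / L"
    proof -
      have "real (card (A i)) * a + real (card (B j)) * b
          = (real (card (A i)) * (real \<Delta> / 2 ^ i) + real (card (B j)) * (real \<Delta> / 2 ^ j)) / L"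
        by (simp add: a_def b_def add_divide_distrib)
      also have "\<dots> \<le> (2 * M) / L" using ca cb sAB Lpos by (intro divide_right_mono) auto
      finally show ?thesis by simp
    qed
    have "M * (16 * (real c)^2) < M * L" using mult_strict_left_mono[OF Lc Mpos] .
    then have "2 * M / L < M / (8 * (real c)^2)"
      using Lpos cpos by (simp add: field_simps)
    also have "\<dots> \<le> W / (real c)^2" using WM cpos by (simp add: field_simps)
    finally have bigAB: "wt E (A i) (B j) > real (card (A i)) * a + real (card (B j)) * b"
      using cost big by linarith
    have a0: "a \<ge> 0" "b \<ge> 0" using Lpos by (auto simp: a_def b_def)
    obtain X1 X2 where X: "X1 \<subseteq> A i" "X2 \<subseteq> B j" "X1 \<noteq> {}" "X2 \<noteq> {}"
      and dX1: "\<forall>x\<in>X1. (\<Sum>y\<in>X2. ind E x y) \<ge> a"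
      and dX2: "\<forall>y\<in>X2. (\<Sum>x\<in>X1. ind E x y) \<ge> b"
      using prune[OF fA a0 bigAB] by blast
    define E' where "E' = (\<lambda>x y. E x y \<and> (x \<in> X1 \<and> y \<in> X2 \<or> x \<in> X2 \<and> y \<in> X1))"
    have dX: "X1 \<inter> X2 = {}" using X dAB by auto
    have fX: "finite X1" "finite X2" using X fA finite_subset by auto
    have XV: "X1 \<subseteq> V" "X2 \<subseteq> V" using X AH HV by auto
    have bip: "bipartite_subgraph V E X1 X2 E'"
      unfolding bipartite_subgraph_def E'_def using XV dX sym by auto
    have e1: "degree (X1 \<union> X2) E' x = card {y\<in>X2. E x y}" if "x \<in> X1" for x
    proof -
      have "{y\<in>X1 \<union> X2. E' x y} = {y\<in>X2. E x y}" using that dX by (auto simp: E'_def)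
      then show ?thesis by (simp add: degree_def)
    qed
    have e2: "degree (X1 \<union> X2) E' y = card {x\<in>X1. E y x}" if "y \<in> X2" for y
    proof -
      have "{x\<in>X1 \<union> X2. E' y x} = {x\<in>X1. E y x}" using that dX by (auto simp: E'_def)
      then show ?thesis by (simp add: degree_def)
    qed
    have up1: "real (dg x) \<le> real \<Delta> / 2 ^ i" if "x \<in> X1" for x
    proof -
      have xi: "x \<in> H" "cls x = i" using that X AH by (auto simp: A_def)
      have "2 ^ i * dg x \<le> \<Delta>" using cls3[OF xi(1)] xi(2) by simp
      then have "2 ^ i * real (dg x) \<le> real \<Delta>" by (metis of_nat_le_iff of_nat_mult of_nat_numeral of_nat_power)
      then show ?thesis by (simp add: field_simps)
    qed
    have up2: "real (dg x) \<le> real \<Delta> / 2 ^ j" if "x \<in> X2" for x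
    proof -
      have xi: "x \<in> H" "cls x = j" using that X AH by (auto simp: B_def)
      have "2 ^ j * dg x \<le> \<Delta>" using cls3[OF xi(1)] xi(2) by simp
      then have "2 ^ j * real (dg x) \<le> real \<Delta>" by (metis of_nat_le_iff of_nat_mult of_nat_numeral of_nat_power)
      then show ?thesis by (simp add: field_simps)
    qed
    obtain x1 where x1: "x1 \<in> X1" using X by auto
    obtain x2 where x2: "x2 \<in> X2" using X by auto
    have "x1 \<in> H" "x2 \<in> H" using x1 x2 X AH by auto
    then have "d / 4 \<le> real (dg x1)" "d / 4 \<le> real (dg x2)" by (simp_all add: H_def)
    then have D1: "d / 4 \<le> real \<Delta> / 2 ^ i" and D2: "d / 4 \<le> real \<Delta> / 2 ^ j"
      using up1[OF x1] up2[OF x2] by linarith+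
    have g1: "real (degree (X1 \<union> X2) E' x) \<ge> (real \<Delta> / 2 ^ i) / L" if "x \<in> X1" for x
      using dX1 that e1[OF that] sum_ind_card[OF fX(2)] by (simp add: a_def)
    have g2: "real (degree (X1 \<union> X2) E' y) \<ge> (real \<Delta> / 2 ^ j) / L" if "y \<in> X2" for y
    proof -
      have eq: "(\<Sum>x\<in>X1. ind E x y) = real (card {x\<in>X1. E y x})"
        using sum_ind_card[OF fX(1), of E y] by (simp add: indsym)
      have h: "b \<le> (\<Sum>x\<in>X1. ind E x y)" using dX2 that by blast
      have "real (degree (X1 \<union> X2) E' y) = (\<Sum>x\<in>X1. ind E x y)" using e2[OF that] eq by simp
      then show ?thesis using h unfolding b_def by linarith
    qed
    have ne: "X1 \<union> X2 \<noteq> {}" using X by auto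
    have G1: "\<forall>x\<in>X1. real \<Delta> / 2 ^ i / (256 * (ln (real n))\<^sup>2) \<le> real (degree (X1 \<union> X2) E' x)
        \<and> real (degree V E x) \<le> real \<Delta> / 2 ^ i"
      using g1 up1 unfolding L_def dg_def by blast
    have G2: "\<forall>x\<in>X2. real \<Delta> / 2 ^ j / (256 * (ln (real n))\<^sup>2) \<le> real (degree (X1 \<union> X2) E' x)
        \<and> real (degree V E x) \<le> real \<Delta> / 2 ^ j"
      using g2 up2 unfolding L_def dg_def by blast
    show ?thesis
      apply (rule exI[of _ "real \<Delta> / 2 ^ i"], rule exI[of _ "real \<Delta> / 2 ^ j"],
             rule exI[of _ X1], rule exI[of _ X2], rule exI[of _ E'])
      using D1 D2 bip ne G1 G2 by blast
  qed
qed

end
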